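(* Let $G$ be a graph containing a perfect matching $M$, and let $W$ be a shifted $M$-walk in $G$ with endpoints $a$ and $b$. Then $W$ contains a simple shifted $M$-walk $W'$ with endpoints $a$ and $b$.
   Context: Given a perfect matching $M$ in a graph $G$, a shifted $M$-walk with endpoints $a = v_1$ and $b = v_{2\ell}$ is a walk $v_1 v_2 \dots v_{2\ell}$ in $G$ such that $v_{2i}v_{2i+1} \in M$ for every $1 \leq i \leq \ell - 1$ and $v_{2i-1}v_{2i} \notin M$ for every $1 \leq i \leq \ell$. A shifted $M$-walk is simple if it contains each edge of $M$ at most twice. *)

theory Defs
  imports Main
begin

definition graph :: "'a set \<Rightarrow> 'a set set \<Rightarrow> bool" where
  "graph V E \<longleftrightarrow> finite V \<and> (\<forall>e\<in>E. e \<subseteq> V \<and> card e = 2)"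

definition perfect_matching :: "'a set \<Rightarrow> 'a set set \<Rightarrow> 'a set set \<Rightarrow> bool" where
  "perfect_matching V E M \<longleftrightarrow> M \<subseteq> E \<and> (\<forall>v\<in>V. \<exists>!e. e \<in> M \<and> v \<in> e)"

definition walk_edge :: "'a list \<Rightarrow> nat \<Rightarrow> 'a set" where
  "walk_edge W j = {W ! j, W ! Suc j}"

text \<open>Shifted M-walk v_1 ... v_{2l} (l \<ge> 1) with endpoints a, b. In 0-based indexing, the
  traversed edge number j (between positions j and j+1) must be in M for odd j and be an
  edge of G not in M for even j.\<close>
definition shifted_M_walk :: "'a set set \<Rightarrow> 'a set set \<Rightarrow> 'a list \<Rightarrow> 'a \<Rightarrow> 'a \<Rightarrow> bool" where
  "shifted_M_walk E M W a b \<longleftrightarrow>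
     W \<noteq> [] \<and> even (length W) \<and> hd W = a \<and> last W = b \<and>
     (\<forall>j. Suc j < length W \<longrightarrow> walk_edge W j \<in> E) \<and>
     (\<forall>j. Suc j < length W \<longrightarrow> (odd j \<longleftrightarrow> walk_edge W j \<in> M))"

definition edge_count :: "'a list \<Rightarrow> 'a set \<Rightarrow> nat" where
  "edge_count W e = card {j. Suc j < length W \<and> walk_edge W j = e}"

definition simple_walk :: "'a set set \<Rightarrow> 'a list \<Rightarrow> bool" where
  "simple_walk M W \<longleftrightarrow> (\<forall>e\<in>M. edge_count W e \<le> 2)"

definition walk_edges :: "'a list \<Rightarrow> 'a set set" where
  "walk_edges W = {walk_edge W j | j. Suc j < length W}"

end

theory Submission
  imports Defs
begin

lemma nth_cut:
  assumes "j < k" "Suc k < length W" "W!j = W!k"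
    "i < length (take (Suc j) W @ drop (Suc k) W)"
  shows "(take (Suc j) W @ drop (Suc k) W)!i = (if i < j then W!i else W!(i+(k-j)))"
proof (cases "i < Suc j")
  case True
  have "length (take (Suc j) W) = Suc j" using assms by simp
  then show ?thesis using True assms by (auto simp: nth_append less_Suc_eq)
next
  case False
  have l: "length (take (Suc j) W) = Suc j" using assms by simp
  have "(take (Suc j) W @ drop (Suc k) W)!i = drop (Suc k) W ! (i - Suc j)"
    using False l by (simp add: nth_append)
  also have "\<dots> = W ! (Suc k + (i - Suc j))"
    using assms False by (subst nth_drop) auto
  also have "Suc k + (i - Suc j) = i + (k-j)" using False assms by simp
  finally show ?thesis using False by simp
qed

lemma edge_cut:
  assumes "j < k" "Suc k < length W" "W!j = W!k"
    "Suc i < length (take (Suc j) W @ drop (Suc k) W)"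
  shows "walk_edge (take (Suc j) W @ drop (Suc k) W) i
         = walk_edge W (if i < j then i else i+(k-j))"
proof -
  have a: "(take (Suc j) W @ drop (Suc k) W)!i = (if i < j then W!i else W!(i+(k-j)))"
    using assms by (intro nth_cut) auto
  have b: "(take (Suc j) W @ drop (Suc k) W)!Suc i = (if Suc i < j then W!Suc i else W!(Suc i+(k-j)))"
    using assms by (intro nth_cut) auto
  show ?thesis
  proof (cases "i < j")
    case True
    then have "Suc i < j \<or> Suc i = j" by auto
    then show ?thesis using a b True assms(1,3) by (auto simp: walk_edge_def)
  next
    case False
    then show ?thesis using a b by (auto simp: walk_edge_def)
  qed
qed

lemma main:
  "shifted_M_walk E M W a b \<Longrightarrow>
   \<exists>W'. shifted_M_walk E M W' a b \<and> simple_walk M W' \<and> walk_edges W' \<subseteq> walk_edges W"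
proof (induction "length W" arbitrary: W rule: less_induct)
  case less
  note sw = less.prems
  show ?case
  proof (cases "simple_walk M W")
    case True
    then show ?thesis using sw by blast
  next
    case False
    then obtain e where eM: "e \<in> M" and ec: "edge_count W e > 2"
      unfolding simple_walk_def by (auto simp: not_le)
    define S where "S = {j. Suc j < length W \<and> walk_edge W j = e}"
    have finS: "finite S" unfolding S_def by (rule finite_subset[of _ "{..<length W}"]) auto
    have cS: "card S > 2" using ec unfolding S_def edge_count_def by simp
    then have "S \<noteq> {}" by auto
    then obtain j0 where "j0 \<in> S" by auto
    then have e_def: "e = {W!j0, W!Suc j0}" unfolding S_def walk_edge_def by auto
    have ce: "card e \<le> 2" unfolding e_def by (simp add: card_insert_le_m1)
    have "(\<lambda>j. W!j) ` S \<subseteq> e"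
      unfolding S_def walk_edge_def by auto
    then have "card ((\<lambda>j. W!j) ` S) \<le> 2" using ce
      by (metis card_mono e_def finite.emptyI finite.insertI le_trans)
    then have "\<not> inj_on (\<lambda>j. W!j) S" using cS card_image by fastforce
    then obtain x y where "x \<in> S" "y \<in> S" "x \<noteq> y" "W!x = W!y"
      unfolding inj_on_def by blast
    then obtain j k where jk: "j \<in> S" "k \<in> S" "j < k" "W!j = W!k"
      by (metis linorder_neq_iff)
    have sk: "Suc k < length W" using jk unfolding S_def by auto
    have oj: "odd j" and ok: "odd k" using jk eM sw unfolding S_def shifted_M_walk_def by auto
    have ekj: "even (k - j)" using oj ok jk by simp
    define W' where "W' = take (Suc j) W @ drop (Suc k) W"
    have lW': "length W' = length W - (k - j)" unfolding W'_def using sk jk by auto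
    have lt: "length W' < length W" using lW' jk sk by auto
    have ed: "walk_edge W' i = walk_edge W (if i < j then i else i+(k-j))"
      if "Suc i < length W'" for i
      using edge_cut[OF jk(3) sk jk(4)] that unfolding W'_def by blast
    have gl: "Suc (if i < j then i else i+(k-j)) < length W" if "Suc i < length W'" for i
      using that lW' jk sk by auto
    have gp: "odd (if i < j then i else i+(k-j)) \<longleftrightarrow> odd i" for i
      using ekj by auto
    have sw': "shifted_M_walk E M W' a b"
    proof -
      have ne: "W' \<noteq> []" using lW' sk jk by auto
      have ev: "even (length W')" using lW' sw ekj jk sk unfolding shifted_M_walk_def
        by (metis dvd_diff_nat)
      have "hd W' = W'!0" using ne by (simp add: hd_conv_nth)
      also have "\<dots> = W!0" unfolding W'_def using nth_cut[OF jk(3) sk jk(4), of 0] ne oj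
        unfolding W'_def by (auto simp: odd_pos)
      also have "\<dots> = a" using sw unfolding shifted_M_walk_def by (auto simp: hd_conv_nth)
      finally have h: "hd W' = a" .
      have "last W' = last W" unfolding W'_def using sk by (simp add: last_drop)
      then have la: "last W' = b" using sw unfolding shifted_M_walk_def by simp
      show ?thesis unfolding shifted_M_walk_def
        using ne ev h la ed gl gp sw unfolding shifted_M_walk_def by metis
    qed
    have sub: "walk_edges W' \<subseteq> walk_edges W"
      unfolding walk_edges_def using ed gl by blast
    from less.hyps[OF lt sw'] obtain W'' where
      "shifted_M_walk E M W'' a b \<and> simple_walk M W'' \<and> walk_edges W'' \<subseteq> walk_edges W'"
      by blast
    then show ?thesis using sub by blast
  qed
qed

theorem lemma5p1:
  assumes "graph V E"
    and "perfect_matching V E M"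
    and "shifted_M_walk E M W a b"
  shows "\<exists>W'. shifted_M_walk E M W' a b \<and> simple_walk M W' \<and> walk_edges W' \<subseteq> walk_edges W"
  using main[OF assms(3)] .

end
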